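(* In the non-contextual setting of the auction problem described in the context (a fixed set of $N$ ads participating at every round, with constant CTRs $\rho_{t,i}=\rho_i\in[0,1]$ for all $t$), run the exponential-weights algorithm with the IPS loss estimator described in the context on the predictor class $\widehat{\mathcal{F}}=\{(x,i)\mapsto\theta_i:\theta\in\{0,\tfrac1T,\tfrac2T,\dots,1\}^N\}$ with learning rate $\eta=\sqrt{\frac{\log T}{T}}$. Then $\mathbb{E}[\mathrm{Reg}]\le O(N\sqrt{T\log T})$.
   Context: Notation: for a vector $v$, $\mathrm{smax}_i v_i$ denotes the second-largest entry, and $\arg\max_i v_i$, $\arg\mathrm{smax}_i v_i$ the indices of the largest and second-largest entries; ties are broken by a fixed deterministic rule. Problem: There are $T$ rounds. At each round $t$ the learner (possibly after observing a context $x_t$, which here is irrelevant) chooses estimated CTRs $\tilde\rho_t\in[0,1]^N$; simultaneously each bidder $i$ chooses a bid $b_{t,i}\in[0,1]$ (possibly adversarially and adaptively, without knowing $\tilde\rho_t$). The winner is $i_t=\arg\max_i b_{t,i}\tilde\rho_{t,i}$, the runner-up $j_t=\arg\mathrm{smax}_i b_{t,i}\tilde\rho_{t,i}$, the payment per click $d_t=b_{t,j_t}\tilde\rho_{t,j_t}/\tilde\rho_{t,i_t}$; the ad $i_t$ is clicked with probability $\rho_{i_t}$ (unknown true CTR). The learner observes $b_t$ and the click indicator $c_t\in\{0,1\}$ and receives $c_td_t$. Regret: $\mathrm{Reg}=\sum_{t=1}^T\mathrm{smax}_i b_{t,i}\rho_i-\sum_{t=1}^T c_td_t$. Algorithm (exponential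 weights with IPS): given a finite class $\mathcal{F}$ of functions $f:\mathcal{X}\times[N]\to[0,1]$ and $\eta>0$, at round $t$ sample $f_t\sim q_t$ with $q_{t,f}\propto\exp(-\eta\sum_{s<t}\hat\ell_{s,f})$, set $\tilde\rho_{t,i}=f_t(x_t,i)$, run the auction, and define for each $f\in\mathcal{F}$ $$\hat\ell_{t,f}=\frac{\mathbb{1}\{i_t=\arg\max_i b_{t,i}f(x_t,i)\}}{p_{t,i_t}}\Big(1-c_t\frac{\mathrm{smax}_j b_{t,j}f(x_t,j)}{f(x_t,i_t)}\Big),\quad p_{t,i}=\Pr_{f_t\sim q_t}\{i_t=i\}.$$ *)

theory Defs
  imports "HOL-Probability.Probability"
begin

text \<open>Ads are indexed by the naturals i < N. Vectors (bids, CTR estimates, true CTRs)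
are functions nat => real; only the entries below N are relevant.
The context x is irrelevant in the non-contextual setting and is omitted: a predictor
of the class is identified with its CTR vector theta.\<close>

type_synonym vec = "nat \<Rightarrow> real"

text \<open>A history entry: (sampled predictor f_t, bid vector b_t, click indicator c_t).\<close>
type_synonym hist = "(vec \<times> vec \<times> bool) list"

text \<open>Deterministic tie-breaking rules for argmax and arg-second-max over indices < N.
Any such rule is allowed (the theorem quantifies over all of them).\<close>
definition valid_argmax :: "nat \<Rightarrow> (vec \<Rightarrow> nat) \<Rightarrow> bool" where
  "valid_argmax N am \<longleftrightarrow> (\<forall>v. am v < N \<and> (\<forall>j<N. v j \<le> v (am v)))"

definition valid_argsmax :: "nat \<Rightarrow> (vec \<Rightarrow> nat) \<Rightarrow> (vec \<Rightarrow> nat) \<Rightarrow> bool" where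
  "valid_argsmax N am as \<longleftrightarrow>
     (\<forall>v. as v < N \<and> as v \<noteq> am v \<and> (\<forall>j<N. j \<noteq> am v \<longrightarrow> v j \<le> v (as v)))"

definition smax :: "(vec \<Rightarrow> nat) \<Rightarrow> vec \<Rightarrow> real" where
  "smax as v = v (as v)"

definition score :: "vec \<Rightarrow> vec \<Rightarrow> vec" where
  "score b th = (\<lambda>i. b i * th i)"

definition grid_class :: "nat \<Rightarrow> nat \<Rightarrow> vec set" where
  "grid_class N T = {th. (\<forall>i<N. \<exists>k::nat. k \<le> T \<and> th i = real k / real T) \<and> (\<forall>i\<ge>N. th i = 0)}"

definition ew_weight :: "vec set \<Rightarrow> real \<Rightarrow> (vec \<Rightarrow> real) \<Rightarrow> vec \<Rightarrow> real" where
  "ew_weight F eta L f =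
     (if f \<in> F then exp (- eta * L f) / (\<Sum>g\<in>F. exp (- eta * L g)) else 0)"

definition win_prob :: "(vec \<Rightarrow> nat) \<Rightarrow> vec set \<Rightarrow> real \<Rightarrow> (vec \<Rightarrow> real) \<Rightarrow> vec \<Rightarrow> nat \<Rightarrow> real" where
  "win_prob am F eta L b i = (\<Sum>g\<in>{g\<in>F. am (score b g) = i}. ew_weight F eta L g)"

definition ips_loss ::
  "(vec \<Rightarrow> nat) \<Rightarrow> (vec \<Rightarrow> nat) \<Rightarrow> vec set \<Rightarrow> real \<Rightarrow> (vec \<Rightarrow> real) \<Rightarrow> vec \<Rightarrow> bool \<Rightarrow> nat \<Rightarrow> vec \<Rightarrow> real" where
  "ips_loss am as F eta L b c it f =
     (if am (score b f) = it
      then (1 / win_prob am F eta L b it) * (1 - (if c then 1 else 0) * smax as (score b f) / f it)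
      else 0)"

definition loss_update ::
  "(vec \<Rightarrow> nat) \<Rightarrow> (vec \<Rightarrow> nat) \<Rightarrow> vec set \<Rightarrow> real \<Rightarrow> (vec \<Rightarrow> real) \<Rightarrow> vec \<times> vec \<times> bool \<Rightarrow> (vec \<Rightarrow> real)" where
  "loss_update am as F eta L r =
     (case r of (ft, b, c) \<Rightarrow> (\<lambda>f. L f + ips_loss am as F eta L b c (am (score b ft)) f))"

definition cum_loss :: "(vec \<Rightarrow> nat) \<Rightarrow> (vec \<Rightarrow> nat) \<Rightarrow> vec set \<Rightarrow> real \<Rightarrow> hist \<Rightarrow> (vec \<Rightarrow> real)" where
  "cum_loss am as F eta h = foldl (loss_update am as F eta) (\<lambda>f. 0) h"

definition round_step ::
  "(vec \<Rightarrow> nat) \<Rightarrow> (vec \<Rightarrow> nat) \<Rightarrow> vec set \<Rightarrow> real \<Rightarrow> vec \<Rightarrow> (hist \<Rightarrow> vec pmf) \<Rightarrow> hist \<Rightarrow> hist pmf" where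
  "round_step am as F eta rho adv h =
     do { b \<leftarrow> adv h;
          ft \<leftarrow> embed_pmf (ew_weight F eta (cum_loss am as F eta h));
          c \<leftarrow> bernoulli_pmf (rho (am (score b ft)));
          return_pmf (h @ [(ft, b, c)]) }"

fun run_game ::
  "(vec \<Rightarrow> nat) \<Rightarrow> (vec \<Rightarrow> nat) \<Rightarrow> vec set \<Rightarrow> real \<Rightarrow> vec \<Rightarrow> (hist \<Rightarrow> vec pmf) \<Rightarrow> nat \<Rightarrow> hist pmf" where
  "run_game am as F eta rho adv 0 = return_pmf []"
| "run_game am as F eta rho adv (Suc n) = run_game am as F eta rho adv n \<bind> round_step am as F eta rho adv"

definition payment :: "(vec \<Rightarrow> nat) \<Rightarrow> (vec \<Rightarrow> nat) \<Rightarrow> vec \<Rightarrow> vec \<Rightarrow> real" where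
  "payment am as b ft = b (as (score b ft)) * ft (as (score b ft)) / ft (am (score b ft))"

definition regret :: "(vec \<Rightarrow> nat) \<Rightarrow> (vec \<Rightarrow> nat) \<Rightarrow> vec \<Rightarrow> hist \<Rightarrow> real" where
  "regret am as rho h =
     (\<Sum>(ft, b, c)\<leftarrow>h. smax as (score b rho) - (if c then 1 else 0) * payment am as b ft)"

end

theory Submission
  imports Defs
begin

lemma exp_quad:
  fixes x :: real assumes "0 \<le> x" shows "exp (- x) \<le> 1 - x + x^2/2"
proof -
  let ?g = "\<lambda>x::real. 1 - x + x^2/2 - exp (- x)"
  have "?g 0 \<le> ?g x"
  proof (rule DERIV_nonneg_imp_nondecreasing[OF assms])
    fix y :: real assume "0 \<le> y" "y \<le> x"
    have "(?g has_real_derivative (-1 + y + exp (- y))) (at y)"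
      by (auto intro!: derivative_eq_intros simp: power2_eq_square)
    moreover have "0 \<le> -1 + y + exp (- y)" using exp_ge_add_one_self[of "-y"] by simp
    ultimately show "\<exists>d. (?g has_real_derivative d) (at y) \<and> 0 \<le> d" by blast
  qed
  then show ?thesis by simp
qed

lemma potential_step:
  fixes F :: "'a set" and L l :: "'a \<Rightarrow> real" and eta :: real
  assumes fin: "finite F" and ne: "F \<noteq> {}" and eta: "0 < eta"
    and lnn: "\<And>f. f \<in> F \<Longrightarrow> 0 \<le> l f"
  defines "W \<equiv> \<lambda>L. (\<Sum>g\<in>F. exp (- eta * L g))"
  defines "q \<equiv> \<lambda>f. exp (- eta * L f) / W L"
  shows "ln (W (\<lambda>f. L f + l f)) \<le> ln (W L) - eta * (\<Sum>f\<in>F. q f * l f)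
            + eta^2/2 * (\<Sum>f\<in>F. q f * (l f)^2)"
proof -
  have Wpos: "\<And>L. 0 < W L" unfolding W_def using fin ne by (intro sum_pos) auto
  have "W (\<lambda>f. L f + l f) = (\<Sum>f\<in>F. exp (- eta * L f) * exp (- (eta * l f)))"
    unfolding W_def by (intro sum.cong) (auto simp: algebra_simps simp flip: exp_add)
  also have "\<dots> \<le> (\<Sum>f\<in>F. exp (- eta * L f) * (1 - eta * l f + (eta * l f)^2/2))"
    using lnn eta by (intro sum_mono mult_left_mono exp_quad) auto
  also have "\<dots> = W L * (1 - eta * (\<Sum>f\<in>F. q f * l f) + eta^2/2 * (\<Sum>f\<in>F. q f * (l f)^2))"
  proof -
    have k: "\<And>x. W L * (\<Sum>f\<in>F. q f * x f) = (\<Sum>f\<in>F. exp (- eta * L f) * x f)"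
      using Wpos[of L] by (simp add: q_def sum_distrib_left)
    have "(\<Sum>f\<in>F. exp (- eta * L f) * (1 - eta * l f + (eta * l f)^2/2))
       = W L - eta * (\<Sum>f\<in>F. exp (- eta * L f) * l f) + eta^2/2 * (\<Sum>f\<in>F. exp (- eta * L f) * (l f)^2)"
    proof -
      have "\<And>f. exp (- eta * L f) * (1 - eta * l f + (eta * l f)^2/2)
         = exp (- eta * L f) - eta * (exp (- eta * L f) * l f) + eta^2/2 * (exp (- eta * L f) * (l f)^2)"
        by (simp add: algebra_simps power2_eq_square)
      then show ?thesis unfolding W_def
        by (simp only: sum.distrib sum_subtractf flip: sum_distrib_left)
    qed
    also have "\<dots> = W L * (1 - eta * (\<Sum>f\<in>F. q f * l f) + eta^2/2 * (\<Sum>f\<in>F. q f * (l f)^2))"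
      by (simp only: k[symmetric]) (simp add: algebra_simps)
    finally show ?thesis .
  qed
  finally have le: "W (\<lambda>f. L f + l f) \<le> W L * (1 - eta * (\<Sum>f\<in>F. q f * l f) + eta^2/2 * (\<Sum>f\<in>F. q f * (l f)^2))" .
  define S where "S = 1 - eta * (\<Sum>f\<in>F. q f * l f) + eta^2/2 * (\<Sum>f\<in>F. q f * (l f)^2)"
  have "0 < W L * S" using le Wpos[of "\<lambda>f. L f + l f"] unfolding S_def by linarith
  then have Spos: "0 < S" using Wpos[of L] zero_less_mult_pos by blast
  have le': "W (\<lambda>f. L f + l f) \<le> W L * S" using le unfolding S_def .
  have pos: "0 < W L * S" using Wpos[of L] Spos by simp
  have "ln (W (\<lambda>f. L f + l f)) \<le> ln (W L * S)"
    using ln_le_cancel_iff[OF Wpos pos] le' by simp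
  also have "\<dots> = ln (W L) + ln S"
  proof -
    have "W L \<noteq> 0" "S \<noteq> 0" using Wpos[of L] Spos by auto
    then show ?thesis by (simp add: ln_mult)
  qed
  also have "\<dots> \<le> ln (W L) + (S - 1)" using ln_le_minus_one[OF Spos] by simp
  finally show ?thesis unfolding S_def by simp
qed

locale auc =
  fixes N T :: nat and rho :: vec and AM AS :: "vec \<Rightarrow> nat" and adv :: "hist \<Rightarrow> vec pmf"
  assumes N2: "2 \<le> N" and T2: "2 \<le> T" and rho: "\<forall>i<N. 0 \<le> rho i \<and> rho i \<le> 1"
    and am: "valid_argmax N AM" and as: "valid_argsmax N AM AS"
    and adv: "\<forall>h. \<forall>b\<in>set_pmf (adv h). \<forall>i<N. 0 \<le> b i \<and> b i \<le> 1"
begin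

definition "F = grid_class N T"
definition "eta = sqrt (ln (real T) / real T)"
definition "fs = (\<lambda>i. if i < N then real (nat \<lfloor>rho i * real T\<rfloor>) / real T else 0)"
definition "W L = (\<Sum>g\<in>F. exp (- eta * L g))"
definition "Lh h = cum_loss AM AS F eta h"
definition "Z h = regret AM AS rho h + real (length h) + Lh h fs + ln (W (Lh h)) / eta"
definition "validb b = (\<forall>i<N. 0 \<le> b i \<and> b i \<le> 1)"
definition "valid h = (\<forall>(ft,b,c)\<in>set h. ft \<in> F \<and> validb b)"

lemma eta_pos: "0 < eta"
  using T2 unfolding eta_def by (intro real_sqrt_gt_zero divide_pos_pos) auto

lemma AM_lt: "AM v < N" and AM_max: "j < N \<Longrightarrow> v j \<le> v (AM v)"
  using am unfolding valid_argmax_def by auto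

lemma AS_lt: "AS v < N" and AS_ne: "AS v \<noteq> AM v"
  and AS_max: "j < N \<Longrightarrow> j \<noteq> AM v \<Longrightarrow> v j \<le> v (AS v)"
  using as unfolding valid_argsmax_def by auto

lemma F_range: "f \<in> F \<Longrightarrow> i < N \<Longrightarrow> 0 \<le> f i \<and> f i \<le> 1"
  unfolding F_def grid_class_def using T2
  by (auto simp: divide_le_eq)

lemma F_sub: "F \<subseteq> (\<lambda>k i. if i < N then real (k i) / real T else 0) ` (PiE {..<N} (\<lambda>_. {..T}))"
proof
  fix th assume th: "th \<in> F"
  define k where "k = (\<lambda>i. if i < N then (SOME k. k \<le> T \<and> th i = real k / real T) else undefined)"
  have k: "i < N \<Longrightarrow> k i \<le> T \<and> th i = real (k i) / real T" for i
  proof -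
    assume i: "i < N"
    have "\<exists>k. k \<le> T \<and> th i = real k / real T" using th i unfolding F_def grid_class_def by auto
    from someI_ex[OF this] show ?thesis using i by (simp add: k_def)
  qed
  have "th = (\<lambda>i. if i < N then real (k i) / real T else 0)"
    using th k unfolding F_def grid_class_def by (auto simp: fun_eq_iff)
  moreover have "k \<in> PiE {..<N} (\<lambda>_. {..T})" using k by (auto simp: k_def PiE_def extensional_def)
  ultimately show "th \<in> (\<lambda>k i. if i < N then real (k i) / real T else 0) ` (PiE {..<N} (\<lambda>_. {..T}))"
    by blast
qed

lemma F_finite: "finite F"
  by (rule finite_subset[OF F_sub]) (auto intro: finite_PiE)

lemma F_card: "card F \<le> (T+1)^N"
proof -
  have "card F \<le> card ((\<lambda>k i. if i < N then real (k i) / real T else 0) ` (PiE {..<N} (\<lambda>_. {..T})))"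
    by (rule card_mono[OF _ F_sub]) (auto intro: finite_PiE)
  also have "\<dots> \<le> card (PiE {..<N} (\<lambda>_. {..T}))" by (rule card_image_le) (auto intro: finite_PiE)
  also have "\<dots> = (T+1)^N" by (simp add: card_PiE)
  finally show ?thesis .
qed

lemma fs_F: "fs \<in> F"
  unfolding F_def grid_class_def fs_def
proof (intro CollectI conjI allI impI)
  fix i assume i: "i < N"
  have "rho i * real T \<le> real T" using rho i by (simp add: mult_left_le_one_le)
  then have "nat \<lfloor>rho i * real T\<rfloor> \<le> T" by linarith
  then show "\<exists>k\<le>T. (if i < N then real (nat \<lfloor>rho i * real T\<rfloor>) / real T else 0) = real k / real T"
    using i by auto
qed auto

lemma F_ne: "F \<noteq> {}" using fs_F by auto

lemma fs_approx: "i < N \<Longrightarrow> rho i - 1 / real T \<le> fs i \<and> fs i \<le> rho i"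
proof -
  assume i: "i < N"
  have r: "0 \<le> rho i" using rho i by auto
  have T: "0 < real T" using T2 by auto
  have f: "fs i = real_of_int \<lfloor>rho i * real T\<rfloor> / real T"
    using i r by (simp add: fs_def)
  have a: "rho i * real T - 1 \<le> real_of_int \<lfloor>rho i * real T\<rfloor>" "real_of_int \<lfloor>rho i * real T\<rfloor> \<le> rho i * real T"
    by linarith+
  have "rho i - 1 / real T = (rho i * real T - 1) / real T" using T by (simp add: field_simps)
  also have "\<dots> \<le> fs i" unfolding f using a(1) T by (intro divide_right_mono) auto
  finally have 1: "rho i - 1 / real T \<le> fs i" .
  have "fs i \<le> rho i * real T / real T" unfolding f using a(2) T by (intro divide_right_mono) auto
  then have 2: "fs i \<le> rho i" using T by simp
  show ?thesis using 1 2 by simp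
qed


lemma W_pos: "0 < W L"
  unfolding W_def using F_finite F_ne by (intro sum_pos) auto

lemma q_eq: "f \<in> F \<Longrightarrow> ew_weight F eta L f = exp (- eta * L f) / W L"
  by (simp add: ew_weight_def W_def)

lemma q_pos: "f \<in> F \<Longrightarrow> 0 < ew_weight F eta L f"
  using W_pos by (simp add: q_eq)

lemma q_nn: "0 \<le> ew_weight F eta L f"
  using q_pos[of f L] by (cases "f \<in> F") (auto simp: ew_weight_def)

lemma q_sum: "(\<Sum>f\<in>F. ew_weight F eta L f) = 1"
proof -
  have "(\<Sum>f\<in>F. ew_weight F eta L f) = (\<Sum>f\<in>F. exp (- eta * L f)) / W L"
    by (simp add: q_eq sum_divide_distrib)
  then show ?thesis using W_pos[of L] by (simp add: W_def)
qed

lemma wp_eq: "win_prob AM F eta L b i = (\<Sum>f\<in>F. if AM (score b f) = i then ew_weight F eta L f else 0)"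
  unfolding win_prob_def using F_finite by (simp add: sum.inter_filter)

lemma wp_ge: "ft \<in> F \<Longrightarrow> ew_weight F eta L ft \<le> win_prob AM F eta L b (AM (score b ft))"
  unfolding win_prob_def using F_finite q_nn
  by (intro member_le_sum) auto

lemma wp_pos: "ft \<in> F \<Longrightarrow> 0 < win_prob AM F eta L b (AM (score b ft))"
  using wp_ge q_pos by (meson less_le_trans)

lemma score_nn: "validb b \<Longrightarrow> f \<in> F \<Longrightarrow> i < N \<Longrightarrow> 0 \<le> score b f i"
  using F_range[of f i] by (auto simp: validb_def score_def)

lemma score_le: "validb b \<Longrightarrow> f \<in> F \<Longrightarrow> i < N \<Longrightarrow> score b f i \<le> f i"
  using F_range[of f i] by (auto simp: validb_def score_def intro: mult_left_le_one_le)

lemma pay_nn: "validb b \<Longrightarrow> f \<in> F \<Longrightarrow> 0 \<le> payment AM AS b f"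
  unfolding payment_def using score_nn[of b f "AS (score b f)"] F_range[of f "AM (score b f)"] AS_lt AM_lt
  by (auto simp: score_def)

lemma pay_le1: "validb b \<Longrightarrow> f \<in> F \<Longrightarrow> payment AM AS b f \<le> 1"
proof -
  assume b: "validb b" and f: "f \<in> F"
  let ?v = "score b f"
  have "?v (AS ?v) \<le> ?v (AM ?v)" using AM_max[OF AS_lt] .
  also have "\<dots> \<le> f (AM ?v)" using score_le[OF b f AM_lt] .
  finally have le: "?v (AS ?v) \<le> f (AM ?v)" .
  have "payment AM AS b f = ?v (AS ?v) / f (AM ?v)" by (simp add: payment_def score_def)
  also have "\<dots> \<le> 1" using le F_range[OF f AM_lt]
  proof (cases "f (AM ?v) = 0")
    case False
    then have "0 < f (AM ?v)" using F_range[OF f AM_lt[of ?v]] by auto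
    then show ?thesis using le by (simp add: divide_le_eq)
  qed simp
  finally show ?thesis .
qed

lemma ips_eq: "ips_loss AM AS F eta L b c it f =
  (if AM (score b f) = it then (1 - (if c then 1 else 0) * payment AM AS b f) / win_prob AM F eta L b it else 0)"
  by (simp add: ips_loss_def smax_def payment_def score_def)

lemma ips_nn: "validb b \<Longrightarrow> f \<in> F \<Longrightarrow> 0 \<le> ips_loss AM AS F eta L b c it f"
  unfolding ips_eq using pay_le1[of b f] q_nn
  by (auto simp: win_prob_def intro!: divide_nonneg_nonneg sum_nonneg)

lemma ips_sq: "validb b \<Longrightarrow> f \<in> F \<Longrightarrow>
   (ips_loss AM AS F eta L b c it f)^2 \<le> (if AM (score b f) = it then 1 / (win_prob AM F eta L b it)^2 else 0)"
proof -
  assume b: "validb b" and f: "f \<in> F"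
  let ?x = "1 - (if c then 1 else 0) * payment AM AS b f"
  have x: "0 \<le> ?x" "?x \<le> 1" using pay_le1[OF b f] pay_nn[OF b f] by auto
  have "?x^2 \<le> 1" using x by (simp add: power_le_one)
  then show ?thesis unfolding ips_eq by (auto simp: power_divide divide_right_mono)
qed

lemma sum_q_sq: "validb b \<Longrightarrow> ft \<in> F \<Longrightarrow>
   (\<Sum>f\<in>F. ew_weight F eta L f * (ips_loss AM AS F eta L b c (AM (score b ft)) f)^2)
     \<le> 1 / win_prob AM F eta L b (AM (score b ft))"
proof -
  assume b: "validb b" and ft: "ft \<in> F"
  let ?it = "AM (score b ft)"
  let ?p = "win_prob AM F eta L b ?it"
  have p: "0 < ?p" using wp_pos[OF ft] .
  have "(\<Sum>f\<in>F. ew_weight F eta L f * (ips_loss AM AS F eta L b c ?it f)^2)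
     \<le> (\<Sum>f\<in>F. ew_weight F eta L f * (if AM (score b f) = ?it then 1 / ?p^2 else 0))"
    using ips_sq[OF b] q_nn by (intro sum_mono mult_left_mono) auto
  also have "\<dots> = (\<Sum>f\<in>F. (if AM (score b f) = ?it then ew_weight F eta L f else 0)) / ?p^2"
    by (auto simp: sum_divide_distrib intro!: sum.cong)
  also have "\<dots> = ?p / ?p^2" by (simp add: wp_eq)
  also have "\<dots> = 1 / ?p" using p by (simp add: power2_eq_square)
  finally show ?thesis .
qed


definition "Y L b ft c = 1 + (smax AS (score b rho) - (if c then 1 else 0) * payment AM AS b ft)
   + ips_loss AM AS F eta L b c (AM (score b ft)) fs
   - (\<Sum>f\<in>F. ew_weight F eta L f * ips_loss AM AS F eta L b c (AM (score b ft)) f)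
   + eta / 2 * (1 / win_prob AM F eta L b (AM (score b ft)))"

lemma Lh_snoc: "Lh (h @ [(ft, b, c)]) = (\<lambda>f. Lh h f + ips_loss AM AS F eta (Lh h) b c (AM (score b ft)) f)"
  by (simp add: Lh_def cum_loss_def loss_update_def)

lemma regret_snoc: "regret AM AS rho (h @ [(ft, b, c)]) =
   regret AM AS rho h + (smax AS (score b rho) - (if c then 1 else 0) * payment AM AS b ft)"
  by (simp add: regret_def)

lemma Z_step:
  assumes ft: "ft \<in> F" and b: "validb b"
  shows "Z (h @ [(ft, b, c)]) \<le> Z h + Y (Lh h) b ft c"
proof -
  define L where "L = Lh h"
  define l where "l = (\<lambda>f. ips_loss AM AS F eta L b c (AM (score b ft)) f)"
  define p where "p = win_prob AM F eta L b (AM (score b ft))"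
  have qe: "\<And>f. f \<in> F \<Longrightarrow> exp (- eta * L f) / W L = ew_weight F eta L f" by (simp add: q_eq)
  have pot: "ln (W (\<lambda>f. L f + l f)) \<le> ln (W L) - eta * (\<Sum>f\<in>F. ew_weight F eta L f * l f)
            + eta^2/2 * (\<Sum>f\<in>F. ew_weight F eta L f * (l f)^2)"
  proof -
    have e1: "(\<Sum>f\<in>F. exp (- eta * L f) / W L * l f) = (\<Sum>f\<in>F. ew_weight F eta L f * l f)"
      by (intro sum.cong refl) (simp add: q_eq)
    have e2: "(\<Sum>f\<in>F. exp (- eta * L f) / W L * (l f)^2) = (\<Sum>f\<in>F. ew_weight F eta L f * (l f)^2)"
      by (intro sum.cong refl) (simp add: q_eq)
    have P: "ln (W (\<lambda>f. L f + l f)) \<le> ln (W L) - eta * (\<Sum>f\<in>F. exp (- eta * L f) / W L * l f)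
            + eta^2/2 * (\<Sum>f\<in>F. exp (- eta * L f) / W L * (l f)^2)"
      using potential_step[OF F_finite F_ne eta_pos, of l L] ips_nn[OF b] unfolding l_def W_def
      by blast
    show ?thesis using P unfolding e1 e2 .
  qed
  have sq: "(\<Sum>f\<in>F. ew_weight F eta L f * (l f)^2) \<le> 1 / p"
    unfolding l_def p_def by (rule sum_q_sq[OF b ft])
  have "ln (W (\<lambda>f. L f + l f)) / eta \<le> ln (W L) / eta - (\<Sum>f\<in>F. ew_weight F eta L f * l f) + eta / 2 * (1 / p)"
  proof -
    have "ln (W (\<lambda>f. L f + l f)) \<le> ln (W L) - eta * (\<Sum>f\<in>F. ew_weight F eta L f * l f) + eta^2/2 * (1/p)"
      using pot sq eta_pos by (smt (verit) mult_left_mono zero_le_divide_iff zero_le_power2)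
    then have "ln (W (\<lambda>f. L f + l f)) / eta \<le> (ln (W L) - eta * (\<Sum>f\<in>F. ew_weight F eta L f * l f) + eta^2/2 * (1/p)) / eta"
      using eta_pos by (intro divide_right_mono) auto
    also have "\<dots> = ln (W L) / eta - (\<Sum>f\<in>F. ew_weight F eta L f * l f) + eta / 2 * (1 / p)"
      using eta_pos by (simp add: field_simps power2_eq_square)
    finally show ?thesis .
  qed
  then show ?thesis
    unfolding Z_def Y_def Lh_snoc regret_snoc L_def[symmetric] l_def[symmetric] p_def[symmetric]
    by (simp add: l_def)
qed

lemma regret_bounds: "valid h \<Longrightarrow> - real (length h) \<le> regret AM AS rho h \<and> regret AM AS rho h \<le> real (length h)"
proof (induction h)
  case Nil then show ?case by (simp add: regret_def)
next
  case (Cons r h)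
  obtain ft b c where r: "r = (ft, b, c)" by (cases r) auto
  have ft: "ft \<in> F" and b: "validb b" and vh: "valid h" using Cons.prems by (auto simp: valid_def r)
  have s1: "0 \<le> smax AS (score b rho)" "smax AS (score b rho) \<le> 1"
    using b rho AS_lt[of "score b rho"] unfolding validb_def smax_def score_def
    by (auto intro: mult_le_one)
  have "regret AM AS rho (r # h) = (smax AS (score b rho) - (if c then 1 else 0) * payment AM AS b ft) + regret AM AS rho h"
    by (simp add: regret_def r)
  then show ?case using Cons.IH[OF vh] s1 pay_nn[OF b ft] pay_le1[OF b ft] by auto
qed

lemma Z_nn: "valid h \<Longrightarrow> 0 \<le> Z h"
proof -
  assume v: "valid h"
  have "exp (- eta * Lh h fs) \<le> W (Lh h)"
    unfolding W_def using F_finite fs_F by (intro member_le_sum) auto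
  then have "- eta * Lh h fs \<le> ln (W (Lh h))" using W_pos
    by (metis exp_gt_zero ln_exp ln_le_cancel_iff)
  then have "0 \<le> Lh h fs + ln (W (Lh h)) / eta" using eta_pos by (simp add: field_simps)
  then show ?thesis using regret_bounds[OF v] unfolding Z_def by linarith
qed

lemma Z_Nil: "Z [] = ln (real (card F)) / eta"
  by (simp add: Z_def regret_def Lh_def cum_loss_def W_def)


lemma approx_fs:
  assumes b: "validb b"
  shows "smax AS (score b rho) - rho (AM (score b fs)) * payment AM AS b fs \<le> 1 / real T"
proof -
  define v where "v = score b fs"
  define w where "w = score b rho"
  have T: "0 < real T" using T2 by auto
  have vw: "k < N \<Longrightarrow> w k - 1 / real T \<le> v k \<and> v k \<le> w k" for k
  proof -
    assume k: "k < N"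
    have bk: "0 \<le> b k" "b k \<le> 1" using b k by (auto simp: validb_def)
    have fa: "rho k - 1 / real T \<le> fs k" "fs k \<le> rho k" using fs_approx[OF k] by auto
    have "b k * (rho k - 1 / real T) \<le> b k * fs k" using bk fa by (intro mult_left_mono) auto
    moreover have "b k * (1 / real T) \<le> 1 / real T" using bk T by (simp add: divide_le_eq)
    moreover have "b k * fs k \<le> b k * rho k" using bk fa by (intro mult_left_mono) auto
    ultimately show ?thesis unfolding v_def w_def score_def by (simp add: right_diff_distrib)
  qed
  let ?i = "AM v"
  have pay: "payment AM AS b fs = v (AS v) / fs ?i"
    by (simp add: payment_def v_def score_def)
  show ?thesis
  proof (cases "fs ?i = 0")
    case True
    have "v ?i = 0" using True by (simp add: v_def score_def)
    then have "\<And>k. k < N \<Longrightarrow> v k \<le> 0" using AM_max[of _ v] by metis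
    then have "w (AS w) \<le> 1 / real T" using vw[OF AS_lt[of w]] AS_lt[of w] by fastforce
    then show ?thesis using True by (simp add: pay smax_def w_def v_def[symmetric])
  next
    case False
    have fpos: "0 < fs ?i" using False F_range[OF fs_F AM_lt[of v]] by auto
    have vnn: "0 \<le> v (AS v)" unfolding v_def using score_nn[OF b fs_F AS_lt] .
    have "fs ?i \<le> rho ?i" using fs_approx[OF AM_lt] by auto
    then have "v (AS v) \<le> rho ?i * (v (AS v) / fs ?i)"
    proof -
      assume fr: "fs ?i \<le> rho ?i"
      have "v (AS v) = v (AS v) * fs ?i / fs ?i" using fpos by simp
      also have "\<dots> \<le> v (AS v) * rho ?i / fs ?i"
        using fpos vnn fr by (intro divide_right_mono mult_left_mono) auto
      finally show ?thesis by (simp add: ac_simps)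
    qed
    moreover have "w (AS w) \<le> v (AS v) + 1 / real T"
    proof (cases "AM v = AS w")
      case True
      have "AM w \<noteq> AM v" using AS_ne[of w] True by auto
      then have "v (AM w) \<le> v (AS v)" using AS_max[OF AM_lt] by blast
      moreover have "w (AS w) \<le> w (AM w)" using AM_max[OF AS_lt] .
      ultimately show ?thesis using vw[OF AM_lt[of w]] by linarith
    next
      case False
      then have "v (AS w) \<le> v (AS v)" using AS_max[OF AS_lt] by metis
      then show ?thesis using vw[OF AS_lt[of w]] by linarith
    qed
    ultimately show ?thesis by (simp add: pay smax_def w_def v_def[symmetric])
  qed
qed

lemma sum_q_over_p:
  "(\<Sum>ft\<in>F. ew_weight F eta L ft / win_prob AM F eta L b (AM (score b ft))) \<le> real N"
proof -
  let ?q = "ew_weight F eta L"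
  let ?p = "win_prob AM F eta L b"
  have "(\<Sum>ft\<in>F. ?q ft / ?p (AM (score b ft)))
     = (\<Sum>i\<in>{..<N}. \<Sum>ft\<in>{ft\<in>F. AM (score b ft) = i}. ?q ft / ?p (AM (score b ft)))"
    using F_finite AM_lt by (intro sum.group[symmetric]) auto
  also have "\<dots> = (\<Sum>i\<in>{..<N}. (\<Sum>ft\<in>{ft\<in>F. AM (score b ft) = i}. ?q ft) / ?p i)"
    by (intro sum.cong refl) (auto simp: sum_divide_distrib)
  also have "\<dots> = (\<Sum>i\<in>{..<N}. ?p i / ?p i)" by (simp add: win_prob_def)
  also have "\<dots> \<le> (\<Sum>i\<in>{..<N}. 1)" by (intro sum_mono) auto
  finally show ?thesis by simp
qed


lemma EY:
  assumes b: "validb b"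
  shows "(\<Sum>ft\<in>F. ew_weight F eta L ft * (rho (AM (score b ft)) * Y L b ft True
            + (1 - rho (AM (score b ft))) * Y L b ft False)) \<le> 1 + 1 / real T + eta * real N / 2"
proof -
  define q where "q = ew_weight F eta L"
  define i where "i = (\<lambda>f. AM (score b f))"
  define p where "p = win_prob AM F eta L b"
  define d where "d = payment AM AS b"
  define l where "l = (\<lambda>c ft f. ips_loss AM AS F eta L b c (i ft) f)"
  define m where "m = (\<lambda>ft f. if i f = i ft then (1 - rho (i f) * d f) / p (i f) else 0)"
  define sm where "sm = smax AS (score b rho)"
  have i_eq: "\<And>f. AM (score b f) = i f" by (simp add: i_def)
  have l_eq: "\<And>c ft f. ips_loss AM AS F eta L b c (AM (score b ft)) f = l c ft f" by (simp add: l_def i_def)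
  have lm: "rho (i ft) * l True ft f + (1 - rho (i ft)) * l False ft f = m ft f" for ft f
  proof (cases "i f = i ft")
    case True
    then show ?thesis unfolding l_def m_def ips_eq i_eq p_def[symmetric] d_def[symmetric]
      by (simp add: field_simps add_divide_distrib diff_divide_distrib)
  next
    case False
    then show ?thesis unfolding l_def m_def ips_eq i_eq by simp
  qed
  have Ye: "rho (i ft) * Y L b ft True + (1 - rho (i ft)) * Y L b ft False
     = 1 + sm - rho (i ft) * d ft + m ft fs - (\<Sum>f\<in>F. q f * m ft f) + eta / 2 * (1 / p (i ft))" for ft
  proof -
    have S1: "rho (i ft) * (\<Sum>f\<in>F. q f * l True ft f) + (1 - rho (i ft)) * (\<Sum>f\<in>F. q f * l False ft f)
       = (\<Sum>f\<in>F. q f * m ft f)"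
    proof -
      have "rho (i ft) * (\<Sum>f\<in>F. q f * l True ft f) + (1 - rho (i ft)) * (\<Sum>f\<in>F. q f * l False ft f)
         = (\<Sum>f\<in>F. rho (i ft) * (q f * l True ft f) + (1 - rho (i ft)) * (q f * l False ft f))"
        by (simp only: sum_distrib_left sum.distrib)
      also have "\<dots> = (\<Sum>f\<in>F. q f * (rho (i ft) * l True ft f + (1 - rho (i ft)) * l False ft f))"
        by (intro sum.cong refl) (simp add: algebra_simps)
      also have "\<dots> = (\<Sum>f\<in>F. q f * m ft f)" by (simp only: lm)
      finally show ?thesis .
    qed
    have S2: "rho (i ft) * l True ft fs + (1 - rho (i ft)) * l False ft fs = m ft fs" by (rule lm)
    define e where "e = eta / 2 * (1 / p (i ft))"
    have Yc: "Y L b ft c = 1 + (sm - (if c then 1 else 0) * d ft) + l c ft fs - (\<Sum>f\<in>F. q f * l c ft f)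
        + e" for c
      by (simp add: Y_def q_def l_def i_def p_def d_def sm_def e_def)
    have "rho (i ft) * Y L b ft True + (1 - rho (i ft)) * Y L b ft False
       = (1 + sm + e) - rho (i ft) * d ft
         + (rho (i ft) * l True ft fs + (1 - rho (i ft)) * l False ft fs)
         - (rho (i ft) * (\<Sum>f\<in>F. q f * l True ft f) + (1 - rho (i ft)) * (\<Sum>f\<in>F. q f * l False ft f))"
      unfolding Yc by (simp add: algebra_simps)
    then show ?thesis unfolding S1 S2 e_def by simp
  qed
  have qs: "(\<Sum>f\<in>F. q f) = 1" unfolding q_def by (rule q_sum)
  have pm: "f \<in> F \<Longrightarrow> (\<Sum>ft\<in>F. q ft * m ft f) = 1 - rho (i f) * d f" for f
  proof -
    assume f: "f \<in> F"
    have pp: "0 < p (i f)" unfolding p_def i_def by (rule wp_pos[OF f])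
    have "(\<Sum>ft\<in>F. q ft * m ft f) = (\<Sum>ft\<in>F. (if AM (score b ft) = i f then q ft else 0)) * ((1 - rho (i f) * d f) / p (i f))"
      unfolding m_def sum_distrib_right by (intro sum.cong refl) (auto simp: i_def)
    also have "\<dots> = 1 - rho (i f) * d f"
    proof -
      have "(\<Sum>ft\<in>F. (if AM (score b ft) = i f then q ft else 0)) = p (i f)"
        unfolding q_def p_def by (rule wp_eq[symmetric])
      then have "(\<Sum>ft\<in>F. (if AM (score b ft) = i f then q ft else 0)) * ((1 - rho (i f) * d f) / p (i f))
         = p (i f) * ((1 - rho (i f) * d f) / p (i f))" by (simp only:)
      also have "\<dots> = 1 - rho (i f) * d f" using pp by simp
      finally show ?thesis .
    qed
    finally show ?thesis .
  qed
  have A: "(\<Sum>ft\<in>F. q ft * (\<Sum>f\<in>F. q f * m ft f)) = 1 - (\<Sum>f\<in>F. q f * (rho (i f) * d f))"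
  proof -
    have "(\<Sum>ft\<in>F. q ft * (\<Sum>f\<in>F. q f * m ft f)) = (\<Sum>f\<in>F. q f * (\<Sum>ft\<in>F. q ft * m ft f))"
    proof -
      have "(\<Sum>ft\<in>F. q ft * (\<Sum>f\<in>F. q f * m ft f)) = (\<Sum>ft\<in>F. \<Sum>f\<in>F. q f * (q ft * m ft f))"
        unfolding sum_distrib_left by (simp add: mult.left_commute)
      also have "\<dots> = (\<Sum>f\<in>F. \<Sum>ft\<in>F. q f * (q ft * m ft f))" by (rule sum.swap)
      also have "\<dots> = (\<Sum>f\<in>F. q f * (\<Sum>ft\<in>F. q ft * m ft f))" by (simp only: sum_distrib_left)
      finally show ?thesis .
    qed
    also have "\<dots> = (\<Sum>f\<in>F. q f * (1 - rho (i f) * d f))" by (intro sum.cong refl) (simp add: pm)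
    also have "\<dots> = 1 - (\<Sum>f\<in>F. q f * (rho (i f) * d f))"
    proof -
      have "(\<Sum>f\<in>F. q f * (1 - rho (i f) * d f)) = (\<Sum>f\<in>F. q f - q f * (rho (i f) * d f))"
        by (simp add: algebra_simps)
      also have "\<dots> = 1 - (\<Sum>f\<in>F. q f * (rho (i f) * d f))" by (simp only: sum_subtractf qs)
      finally show ?thesis .
    qed
    finally show ?thesis .
  qed
  have B: "(\<Sum>ft\<in>F. q ft * m ft fs) = 1 - rho (i fs) * d fs" by (rule pm[OF fs_F])
  have C: "(\<Sum>ft\<in>F. q ft * (1 / p (i ft))) \<le> real N"
    using sum_q_over_p[of L b] by (simp add: q_def p_def i_def)
  have D: "sm - rho (i fs) * d fs \<le> 1 / real T"
    using approx_fs[OF b] by (simp add: sm_def i_def d_def)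
  have "(\<Sum>ft\<in>F. q ft * (rho (i ft) * Y L b ft True + (1 - rho (i ft)) * Y L b ft False))
     = (\<Sum>ft\<in>F. q ft * (1 + sm) - q ft * (rho (i ft) * d ft) + q ft * m ft fs
          - q ft * (\<Sum>f\<in>F. q f * m ft f) + eta / 2 * (q ft * (1 / p (i ft))))"
    by (intro sum.cong refl) (simp only: Ye, simp add: algebra_simps)
  also have "\<dots> = (1 + sm) - (\<Sum>ft\<in>F. q ft * (rho (i ft) * d ft)) + (\<Sum>ft\<in>F. q ft * m ft fs)
          - (\<Sum>ft\<in>F. q ft * (\<Sum>f\<in>F. q f * m ft f)) + eta / 2 * (\<Sum>ft\<in>F. q ft * (1 / p (i ft)))"
  proof -
    have s1: "(\<Sum>ft\<in>F. q ft * (1 + sm)) = 1 + sm" by (simp only: sum_distrib_right[symmetric] qs) simp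
    have s2: "(\<Sum>ft\<in>F. eta / 2 * (q ft * (1 / p (i ft)))) = eta / 2 * (\<Sum>ft\<in>F. q ft * (1 / p (i ft)))"
      by (rule sum_distrib_left[symmetric])
    show ?thesis by (simp only: sum.distrib sum_subtractf s1 s2)
  qed
  also have "\<dots> = 1 + (sm - rho (i fs) * d fs) + eta / 2 * (\<Sum>ft\<in>F. q ft * (1 / p (i ft)))"
    unfolding A B by simp
  also have "\<dots> \<le> 1 + 1 / real T + eta / 2 * real N"
    using C D eta_pos by (intro add_mono mult_left_mono) auto
  finally show ?thesis unfolding q_def i_def by simp
qed


definition "c0 = 1 + 1 / real T + eta * real N / 2"

lemma Q_int: "(\<integral>\<^sup>+x. ennreal (ew_weight F eta L x) \<partial>count_space UNIV) = 1"
proof -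
  have "(\<integral>\<^sup>+x. ennreal (ew_weight F eta L x) \<partial>count_space UNIV) = (\<Sum>x\<in>F. ennreal (ew_weight F eta L x))"
    by (rule nn_integral_count_space'[OF F_finite]) (auto simp: ew_weight_def)
  also have "\<dots> = ennreal (\<Sum>x\<in>F. ew_weight F eta L x)" by (rule sum_ennreal) (rule q_nn)
  finally show ?thesis by (simp add: q_sum)
qed

lemma pmf_Q: "pmf (embed_pmf (ew_weight F eta L)) x = ew_weight F eta L x"
  by (rule pmf_embed_pmf[OF q_nn Q_int])

lemma set_Q: "set_pmf (embed_pmf (ew_weight F eta L)) \<subseteq> F"
  unfolding set_embed_pmf[OF q_nn Q_int] by (auto simp: ew_weight_def split: if_splits)

lemma valid_snoc: "valid h \<Longrightarrow> ft \<in> F \<Longrightarrow> validb b \<Longrightarrow> valid (h @ [(ft, b, c)])"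
  by (auto simp: valid_def)

lemma rho_i: "0 \<le> rho (AM v)" "rho (AM v) \<le> 1"
  using rho AM_lt[of v] by auto

lemma inner_real:
  assumes h: "valid h" and b: "validb b"
  shows "(\<Sum>ft\<in>F. (rho (AM (score b ft)) * Z (h @ [(ft, b, True)])
            + (1 - rho (AM (score b ft))) * Z (h @ [(ft, b, False)])) * ew_weight F eta (Lh h) ft)
         \<le> Z h + c0"
proof -
  let ?Q = "ew_weight F eta (Lh h)"
  let ?r = "\<lambda>ft. rho (AM (score b ft))"
  have "(\<Sum>ft\<in>F. (?r ft * Z (h @ [(ft, b, True)]) + (1 - ?r ft) * Z (h @ [(ft, b, False)])) * ?Q ft)
     \<le> (\<Sum>ft\<in>F. (?r ft * (Z h + Y (Lh h) b ft True) + (1 - ?r ft) * (Z h + Y (Lh h) b ft False)) * ?Q ft)"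
  proof (intro sum_mono mult_right_mono add_mono mult_left_mono)
    fix ft assume ft: "ft \<in> F"
    show "Z (h @ [(ft, b, True)]) \<le> Z h + Y (Lh h) b ft True" by (rule Z_step[OF ft b])
    show "Z (h @ [(ft, b, False)]) \<le> Z h + Y (Lh h) b ft False" by (rule Z_step[OF ft b])
    show "0 \<le> ?r ft" "0 \<le> 1 - ?r ft" using rho_i by auto
    show "0 \<le> ?Q ft" by (rule q_nn)
  qed
  also have "\<dots> = (\<Sum>ft\<in>F. ?Q ft * Z h + ?Q ft * (?r ft * Y (Lh h) b ft True + (1 - ?r ft) * Y (Lh h) b ft False))"
    by (intro sum.cong refl) (simp add: algebra_simps)
  also have "\<dots> = Z h + (\<Sum>ft\<in>F. ?Q ft * (?r ft * Y (Lh h) b ft True + (1 - ?r ft) * Y (Lh h) b ft False))"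
    by (simp only: sum.distrib sum_distrib_right[symmetric] q_sum mult_1)
  also have "\<dots> \<le> Z h + c0" using EY[OF b, of "Lh h"] by (simp add: c0_def)
  finally show ?thesis .
qed

lemma inner:
  assumes h: "valid h" and b: "validb b"
  shows "(\<integral>\<^sup>+ft. \<integral>\<^sup>+c. ennreal (Z (h @ [(ft, b, c)])) \<partial>bernoulli_pmf (rho (AM (score b ft)))
            \<partial>embed_pmf (ew_weight F eta (Lh h))) \<le> ennreal (Z h + c0)"
proof -
  let ?Q = "ew_weight F eta (Lh h)"
  let ?r = "\<lambda>ft. rho (AM (score b ft))"
  let ?G = "\<lambda>ft. ?r ft * Z (h @ [(ft, b, True)]) + (1 - ?r ft) * Z (h @ [(ft, b, False)])"
  have zn: "ft \<in> F \<Longrightarrow> 0 \<le> Z (h @ [(ft, b, c)])" for ft c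
    by (rule Z_nn[OF valid_snoc[OF h _ b]])
  have G: "ft \<in> F \<Longrightarrow> (\<integral>\<^sup>+c. ennreal (Z (h @ [(ft, b, c)])) \<partial>bernoulli_pmf (?r ft)) = ennreal (?G ft)" for ft
  proof -
    assume ft: "ft \<in> F"
    have r: "0 \<le> ?r ft" "?r ft \<le> 1" using rho_i by auto
    have "(\<integral>\<^sup>+c. ennreal (Z (h @ [(ft, b, c)])) \<partial>bernoulli_pmf (?r ft))
       = ennreal (Z (h @ [(ft, b, True)])) * ennreal (?r ft) + ennreal (Z (h @ [(ft, b, False)])) * ennreal (1 - ?r ft)"
      by (rule nn_integral_bernoulli_pmf) (use r in auto)
    also have "\<dots> = ennreal (Z (h @ [(ft, b, True)]) * ?r ft) + ennreal (Z (h @ [(ft, b, False)]) * (1 - ?r ft))"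
      using r zn[OF ft, of True] zn[OF ft, of False] by (simp add: ennreal_mult)
    also have "\<dots> = ennreal (Z (h @ [(ft, b, True)]) * ?r ft + Z (h @ [(ft, b, False)]) * (1 - ?r ft))"
      using r zn[OF ft, of True] zn[OF ft, of False] by (simp add: ennreal_plus)
    finally show ?thesis by (simp add: mult.commute)
  qed
  have Gnn: "ft \<in> F \<Longrightarrow> 0 \<le> ?G ft" for ft
    using rho_i[of "score b ft"] zn[of ft True] zn[of ft False] by simp
  have "(\<integral>\<^sup>+ft. \<integral>\<^sup>+c. ennreal (Z (h @ [(ft, b, c)])) \<partial>bernoulli_pmf (?r ft) \<partial>embed_pmf ?Q)
      = (\<Sum>ft\<in>F. (\<integral>\<^sup>+c. ennreal (Z (h @ [(ft, b, c)])) \<partial>bernoulli_pmf (?r ft)) * ennreal (pmf (embed_pmf ?Q) ft))"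
    by (rule nn_integral_measure_pmf_support[OF F_finite]) (use set_Q in auto)
  also have "\<dots> = (\<Sum>ft\<in>F. ennreal (?G ft * ?Q ft))"
  proof (intro sum.cong refl)
    fix ft assume ft: "ft \<in> F"
    have "ennreal (?G ft) * ennreal (?Q ft) = ennreal (?G ft * ?Q ft)"
      using Gnn[OF ft] q_nn by (simp add: ennreal_mult)
    then show "(\<integral>\<^sup>+c. ennreal (Z (h @ [(ft, b, c)])) \<partial>bernoulli_pmf (?r ft)) * ennreal (pmf (embed_pmf ?Q) ft)
       = ennreal (?G ft * ?Q ft)" by (simp only: G[OF ft] pmf_Q)
  qed
  also have "\<dots> = ennreal (\<Sum>ft\<in>F. ?G ft * ?Q ft)"
    using Gnn q_nn by (auto intro!: sum_ennreal)
  also have "\<dots> \<le> ennreal (Z h + c0)"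
    by (rule ennreal_leI) (rule inner_real[OF h b])
  finally show ?thesis .
qed


abbreviation "RS \<equiv> round_step AM AS F eta rho adv"
abbreviation "RG \<equiv> run_game AM AS F eta rho adv"

lemma step:
  assumes h: "valid h"
  shows "(\<integral>\<^sup>+h'. ennreal (Z h') \<partial>RS h) \<le> ennreal (Z h + c0)"
proof -
  have "(\<integral>\<^sup>+h'. ennreal (Z h') \<partial>RS h)
     = (\<integral>\<^sup>+b. \<integral>\<^sup>+ft. \<integral>\<^sup>+c. ennreal (Z (h @ [(ft, b, c)])) \<partial>bernoulli_pmf (rho (AM (score b ft)))
            \<partial>embed_pmf (ew_weight F eta (Lh h)) \<partial>adv h)"
    by (simp only: round_step_def Lh_def nn_integral_bind_pmf nn_integral_return_pmf zero_le)
  also have "\<dots> \<le> (\<integral>\<^sup>+b. ennreal (Z h + c0) \<partial>adv h)"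
  proof (rule nn_integral_mono_AE)
    show "AE b in measure_pmf (adv h). (\<integral>\<^sup>+ft. \<integral>\<^sup>+c. ennreal (Z (h @ [(ft, b, c)])) \<partial>bernoulli_pmf (rho (AM (score b ft)))
            \<partial>embed_pmf (ew_weight F eta (Lh h))) \<le> ennreal (Z h + c0)"
      unfolding AE_measure_pmf_iff
    proof
      fix b assume "b \<in> set_pmf (adv h)"
      then have "validb b" using adv by (auto simp: validb_def)
      then show "(\<integral>\<^sup>+ft. \<integral>\<^sup>+c. ennreal (Z (h @ [(ft, b, c)])) \<partial>bernoulli_pmf (rho (AM (score b ft)))
            \<partial>embed_pmf (ew_weight F eta (Lh h))) \<le> ennreal (Z h + c0)"
        by (rule inner[OF h])
    qed
  qed
  also have "\<dots> = ennreal (Z h + c0)" by (simp add: measure_pmf.emeasure_space_1)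
  finally show ?thesis .
qed

lemma run_valid: "h \<in> set_pmf (RG n) \<Longrightarrow> valid h \<and> length h = n"
proof (induction n arbitrary: h)
  case 0 then show ?case by (simp add: valid_def)
next
  case (Suc n)
  from Suc.prems obtain h0 where h0: "h0 \<in> set_pmf (RG n)" and h: "h \<in> set_pmf (RS h0)" by auto
  from h obtain b ft c where b: "b \<in> set_pmf (adv h0)"
    and ft: "ft \<in> set_pmf (embed_pmf (ew_weight F eta (cum_loss AM AS F eta h0)))"
    and hh: "h = h0 @ [(ft, b, c)]"
    by (auto simp: round_step_def)
  have "ft \<in> F" using ft set_Q by auto
  moreover have "validb b" using b adv by (auto simp: validb_def)
  ultimately show ?case using Suc.IH[OF h0] hh valid_snoc by auto
qed

lemma run_bound: "(\<integral>\<^sup>+h. ennreal (Z h) \<partial>RG n) \<le> ennreal (Z [] + real n * c0)"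
proof (induction n)
  case 0 then show ?case by simp
next
  case (Suc n)
  have c0: "0 \<le> c0" using eta_pos by (simp add: c0_def)
  have "(\<integral>\<^sup>+h. ennreal (Z h) \<partial>RG (Suc n)) = (\<integral>\<^sup>+h0. \<integral>\<^sup>+h. ennreal (Z h) \<partial>RS h0 \<partial>RG n)"
    by simp
  also have "\<dots> \<le> (\<integral>\<^sup>+h0. ennreal (Z h0) + ennreal c0 \<partial>RG n)"
  proof (rule nn_integral_mono_AE)
    show "AE h0 in measure_pmf (RG n). (\<integral>\<^sup>+h. ennreal (Z h) \<partial>RS h0) \<le> ennreal (Z h0) + ennreal c0"
      unfolding AE_measure_pmf_iff
    proof
      fix h0 assume "h0 \<in> set_pmf (RG n)"
      then have v: "valid h0" using run_valid by blast
      have "(\<integral>\<^sup>+h. ennreal (Z h) \<partial>RS h0) \<le> ennreal (Z h0 + c0)" by (rule step[OF v])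
      also have "\<dots> = ennreal (Z h0) + ennreal c0" using Z_nn[OF v] c0 by (simp add: ennreal_plus)
      finally show "(\<integral>\<^sup>+h. ennreal (Z h) \<partial>RS h0) \<le> ennreal (Z h0) + ennreal c0" .
    qed
  qed
  also have "\<dots> = (\<integral>\<^sup>+h0. ennreal (Z h0) \<partial>RG n) + ennreal c0"
    by (simp add: nn_integral_add measure_pmf.emeasure_space_1)
  also have "\<dots> \<le> ennreal (Z [] + real n * c0) + ennreal c0"
    using Suc.IH by (rule add_right_mono)
  also have "\<dots> = ennreal (Z [] + real (Suc n) * c0)"
  proof -
    have "0 \<le> Z []" by (rule Z_nn) (simp add: valid_def)
    have eq: "Z [] + real (Suc n) * c0 = (Z [] + real n * c0) + c0" by (simp add: algebra_simps)
    have e: "ennreal ((Z [] + real n * c0) + c0) = ennreal (Z [] + real n * c0) + ennreal c0"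
      by (rule ennreal_plus) (use \<open>0 \<le> Z []\<close> c0 in auto)
    show ?thesis by (simp only: eq e)
  qed
  finally show ?case .
qed

lemma main_bound:
  "measure_pmf.expectation (RG T) (regret AM AS rho) \<le> ln (real (card F)) / eta + real T * c0 - real T"
proof -
  let ?M = "measure_pmf (RG T)"
  have sup: "h \<in> set_pmf (RG T) \<Longrightarrow> valid h \<and> length h = T" for h by (rule run_valid)
  have int: "integrable ?M (regret AM AS rho)"
  proof (rule measure_pmf.integrable_const_bound[where B = "real T"])
    show "AE h in ?M. norm (regret AM AS rho h) \<le> real T"
      unfolding AE_measure_pmf_iff using sup regret_bounds by (fastforce simp: abs_le_iff)
  qed simp
  have int2: "integrable ?M (\<lambda>h. regret AM AS rho h + real T)" using int by simp
  have nn: "AE h in ?M. 0 \<le> regret AM AS rho h + real T"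
    unfolding AE_measure_pmf_iff using sup regret_bounds by fastforce
  have Z0: "0 \<le> Z []" by (rule Z_nn) (simp add: valid_def)
  have c0: "0 \<le> c0" using eta_pos by (simp add: c0_def)
  have "ennreal (measure_pmf.expectation (RG T) (\<lambda>h. regret AM AS rho h + real T))
      = (\<integral>\<^sup>+h. ennreal (regret AM AS rho h + real T) \<partial>?M)"
    by (rule nn_integral_eq_integral[OF int2 nn, symmetric])
  also have "\<dots> \<le> (\<integral>\<^sup>+h. ennreal (Z h) \<partial>?M)"
  proof (rule nn_integral_mono_AE)
    show "AE h in ?M. ennreal (regret AM AS rho h + real T) \<le> ennreal (Z h)"
      unfolding AE_measure_pmf_iff
    proof
      fix h assume h: "h \<in> set_pmf (RG T)"
      have "regret AM AS rho h + real T \<le> Z h"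
      proof -
        have "exp (- eta * Lh h fs) \<le> W (Lh h)"
          unfolding W_def using F_finite fs_F by (intro member_le_sum) auto
        then have "- eta * Lh h fs \<le> ln (W (Lh h))" using W_pos
          by (metis exp_gt_zero ln_exp ln_le_cancel_iff)
        then have "0 \<le> Lh h fs + ln (W (Lh h)) / eta" using eta_pos by (simp add: field_simps)
        then show ?thesis using sup[OF h] unfolding Z_def by simp
      qed
      then show "ennreal (regret AM AS rho h + real T) \<le> ennreal (Z h)" by (rule ennreal_leI)
    qed
  qed
  also have "\<dots> \<le> ennreal (Z [] + real T * c0)" by (rule run_bound)
  finally have "measure_pmf.expectation (RG T) (\<lambda>h. regret AM AS rho h + real T) \<le> Z [] + real T * c0"
    using Z0 c0 by (subst (asm) ennreal_le_iff) auto
  moreover have "measure_pmf.expectation (RG T) (\<lambda>h. regret AM AS rho h + real T)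
     = measure_pmf.expectation (RG T) (regret AM AS rho) + real T"
    using int by (simp add: Bochner_Integration.integral_add)
  ultimately show ?thesis by (simp add: Z_Nil)
qed


lemma final_bound:
  "measure_pmf.expectation (RG T) (regret AM AS rho) \<le> 4 * real N * sqrt (real T * ln (real T))"
proof -
  define s where "s = sqrt (real T * ln (real T))"
  have T0: "0 < real T" using T2 by auto
  have lnT: "0 < ln (real T)" using T2 by auto
  have ln2T: "ln 2 \<le> ln (real T)" using T2 by auto
  have es: "eta * s = ln (real T)"
  proof -
    have e: "ln (real T) / real T * (real T * ln (real T)) = ln (real T) * ln (real T)"
      using T0 by (simp add: field_simps)
    have "eta * s = sqrt (ln (real T) / real T * (real T * ln (real T)))"
      unfolding eta_def s_def by (simp only: real_sqrt_mult)
    also have "\<dots> = ln (real T)" using lnT by (simp only: e real_sqrt_mult_self) simp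
    finally show ?thesis .
  qed
  have eT: "eta * real T = s"
  proof -
    have st: "sqrt (real T * real T) = real T" by simp
    have "eta * real T = sqrt (ln (real T) / real T) * sqrt (real T * real T)" by (simp only: st eta_def)
    also have "\<dots> = sqrt (ln (real T) / real T * (real T * real T))" by (simp only: real_sqrt_mult)
    also have "\<dots> = s"
    proof -
      have "ln (real T) / real T * (real T * real T) = real T * ln (real T)" using T0 by (simp add: field_simps)
      then show ?thesis by (simp only: s_def)
    qed
    finally show ?thesis .
  qed
  have spos: "0 < s" unfolding s_def using T0 lnT by simp
  have s1: "1 \<le> real N * s"
  proof -
    have "1 / 4 \<le> real T * ln (real T)"
    proof -
      have "1/4 \<le> (2::real) * ln 2" using ln2_ge_two_thirds by simp
      also have "\<dots> \<le> real T * ln (real T)" using T2 ln2T by (intro mult_mono) auto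
      finally show ?thesis .
    qed
    then have "sqrt (1/4) \<le> s" unfolding s_def by (rule real_sqrt_le_mono)
    then have "1/2 \<le> s" by (simp add: real_sqrt_divide)
    have "2 * (1/2) \<le> real N * s" using N2 \<open>1/2 \<le> s\<close> by (intro mult_mono) auto
    then show ?thesis by simp
  qed
  have card1: "1 \<le> card F" using F_finite F_ne by (simp add: Suc_le_eq card_gt_0_iff)
  have "ln (real (card F)) \<le> ln (real ((T+1)^N))"
  proof (rule ln_le_cancel_iff[THEN iffD2])
    show "real (card F) \<le> real ((T+1)^N)" using F_card by (simp only: of_nat_le_iff)
    show "0 < real (card F)" using card1 by simp
    show "0 < real ((T+1)^N)" by simp
  qed
  also have "\<dots> = real N * ln (real T + 1)" by (simp add: ln_realpow)
  also have "\<dots> \<le> real N * (2 * ln (real T))"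
  proof -
    have "real T + 1 \<le> real T ^ 2" using T2
    proof -
      have "2 * real T \<le> real T * real T" using T2 by (intro mult_right_mono) auto
      moreover have "1 \<le> real T" using T2 by simp
      ultimately show ?thesis unfolding power2_eq_square by linarith
    qed
    then have "ln (real T + 1) \<le> ln (real T ^ 2)" using T0 by (subst ln_le_cancel_iff) auto
    then have "ln (real T + 1) \<le> 2 * ln (real T)" by (simp add: ln_realpow)
    then show ?thesis by (intro mult_left_mono) auto
  qed
  finally have lnF: "ln (real (card F)) \<le> 2 * real N * ln (real T)" by simp
  have "ln (real (card F)) / eta \<le> 2 * real N * ln (real T) / eta"
    using lnF eta_pos by (intro divide_right_mono) auto
  also have "\<dots> = 2 * real N * s" using es eta_pos by (simp add: field_simps)
  finally have A: "ln (real (card F)) / eta \<le> 2 * real N * s" .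
  have B: "real T * c0 - real T = 1 + real N * s / 2"
    using T0 eT by (simp add: c0_def field_simps)
  have "measure_pmf.expectation (RG T) (regret AM AS rho) \<le> ln (real (card F)) / eta + real T * c0 - real T"
    by (rule main_bound)
  also have "\<dots> \<le> 2 * real N * s + 1 + real N * s / 2" using A B by linarith
  also have "\<dots> \<le> 4 * real N * s" using s1 by (simp add: algebra_simps)
  finally show ?thesis by (simp add: s_def)
qed

end

theorem corollary1:
  "\<exists>C::real. \<forall>N T rho am as adv.
     2 \<le> N \<longrightarrow> 2 \<le> T \<longrightarrow>
     (\<forall>i<N. 0 \<le> rho i \<and> rho i \<le> 1) \<longrightarrow>
     valid_argmax N am \<longrightarrow> valid_argsmax N am as \<longrightarrow>
     (\<forall>h. \<forall>b\<in>set_pmf (adv h). \<forall>i<N. 0 \<le> b i \<and> b i \<le> 1) \<longrightarrow>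
     measure_pmf.expectation
        (run_game am as (grid_class N T) (sqrt (ln (real T) / real T)) rho adv T)
        (regret am as rho)
       \<le> C * real N * sqrt (real T * ln (real T))"
proof (intro exI[of _ 4] allI impI)
  fix N T :: nat and rho :: vec and am as :: "vec \<Rightarrow> nat" and adv :: "hist \<Rightarrow> vec pmf"
  assume a: "2 \<le> N" "2 \<le> T" "\<forall>i<N. 0 \<le> rho i \<and> rho i \<le> 1" "valid_argmax N am"
    "valid_argsmax N am as" "\<forall>h. \<forall>b\<in>set_pmf (adv h). \<forall>i<N. 0 \<le> b i \<and> b i \<le> 1"
  interpret auc N T rho am as adv using a by unfold_locales auto
  show "measure_pmf.expectation
        (run_game am as (grid_class N T) (sqrt (ln (real T) / real T)) rho adv T)
        (regret am as rho)
       \<le> 4 * real N * sqrt (real T * ln (real T))"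
    using final_bound unfolding F_def eta_def .
qed

end
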